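(* Let $R$ be a ring, $I$ a non-empty countable set, $D=\{\delta_i\mid i\in I\}$ a family of derivations of $R$, $X=\{x_i\mid i\in I\}$ a set of distinct non-commuting indeterminates, and $S=R[X;D]$. If $S$ is left quasi-duo or right quasi-duo, then $|I|=1$.
   Context: All rings are unital and associative. A derivation of $R$ is an additive map $\delta:R\to R$ with $\delta(rs)=r\delta(s)+\delta(r)s$. The differential polynomial ring in several indeterminates $R[X;D]$ is the set of all (noncommutative) polynomials in the indeterminates $x_i\in X$ (finite $R$-linear combinations of monomials, i.e. finite words in the alphabet $X$, with coefficients on the left), with natural addition and multiplication generated by $x_ia=ax_i+\delta_i(a)$ for $a\in R$, $i\in I$ (the $\delta_i$ need not be distinct). A ring is left (right) quasi-duo if every maximal left (right) ideal is two-sided. *)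

theory Defs
  imports Main "HOL-Library.Countable_Set"
begin

definition derivation :: "('a::ring_1 \<Rightarrow> 'a) \<Rightarrow> bool" where
  "derivation d \<longleftrightarrow> (\<forall>r s. d (r + s) = d r + d s) \<and> (\<forall>r s. d (r * s) = r * d s + d r * s)"

definition unital_ring_hom :: "('a::ring_1 \<Rightarrow> 'b::ring_1) \<Rightarrow> bool" where
  "unital_ring_hom f \<longleftrightarrow> (\<forall>r s. f (r + s) = f r + f s) \<and> (\<forall>r s. f (r * s) = f r * f s) \<and> f 1 = 1"

definition monomial_word :: "('i \<Rightarrow> 'b::ring_1) \<Rightarrow> 'i list \<Rightarrow> 'b" where
  "monomial_word x w = foldr (\<lambda>i m. x i * m) w 1"

definition fin_coeffs :: "'i set \<Rightarrow> ('i list \<Rightarrow> 'a::zero) \<Rightarrow> bool" where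
  "fin_coeffs I c \<longleftrightarrow> finite {w. c w \<noteq> 0} \<and> (\<forall>w. c w \<noteq> 0 \<longrightarrow> set w \<subseteq> I)"

definition lin_comb :: "('a::ring_1 \<Rightarrow> 'b::ring_1) \<Rightarrow> ('i \<Rightarrow> 'b) \<Rightarrow> ('i list \<Rightarrow> 'a) \<Rightarrow> 'b" where
  "lin_comb emb x c = (\<Sum>w\<in>{w. c w \<noteq> 0}. emb (c w) * monomial_word x w)"

text \<open>S (a ring type 'b), together with emb : R \<rightarrow> S and the indeterminates x_i (i \<in> I),
  is the differential polynomial ring R[X;D] with D = (\<delta>_i)_{i\<in>I}: every element of S is uniquely
  a finite left R-linear combination of words in the x_i, and x_i a = a x_i + \<delta>_i(a).\<close>
definition is_diff_poly_ring ::
  "'i set \<Rightarrow> ('i \<Rightarrow> 'a::ring_1 \<Rightarrow> 'a) \<Rightarrow> ('a \<Rightarrow> 'b::ring_1) \<Rightarrow> ('i \<Rightarrow> 'b) \<Rightarrow> bool" where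
  "is_diff_poly_ring I \<delta> emb x \<longleftrightarrow>
     unital_ring_hom emb \<and>
     (\<forall>i\<in>I. \<forall>a. x i * emb a = emb a * x i + emb (\<delta> i a)) \<and>
     (\<forall>s. \<exists>!c. fin_coeffs I c \<and> s = lin_comb emb x c)"

definition left_ideal :: "'b::ring_1 set \<Rightarrow> bool" where
  "left_ideal L \<longleftrightarrow> 0 \<in> L \<and> (\<forall>a\<in>L. \<forall>b\<in>L. a + b \<in> L) \<and> (\<forall>a\<in>L. - a \<in> L)
     \<and> (\<forall>r. \<forall>a\<in>L. r * a \<in> L)"

definition right_ideal :: "'b::ring_1 set \<Rightarrow> bool" where
  "right_ideal L \<longleftrightarrow> 0 \<in> L \<and> (\<forall>a\<in>L. \<forall>b\<in>L. a + b \<in> L) \<and> (\<forall>a\<in>L. - a \<in> L)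
     \<and> (\<forall>r. \<forall>a\<in>L. a * r \<in> L)"

definition two_sided_ideal :: "'b::ring_1 set \<Rightarrow> bool" where
  "two_sided_ideal L \<longleftrightarrow> left_ideal L \<and> right_ideal L"

definition maximal_left_ideal :: "'b::ring_1 set \<Rightarrow> bool" where
  "maximal_left_ideal L \<longleftrightarrow> left_ideal L \<and> L \<noteq> UNIV \<and>
     (\<forall>J. left_ideal J \<and> L \<subseteq> J \<longrightarrow> J = L \<or> J = UNIV)"

definition maximal_right_ideal :: "'b::ring_1 set \<Rightarrow> bool" where
  "maximal_right_ideal L \<longleftrightarrow> right_ideal L \<and> L \<noteq> UNIV \<and>
     (\<forall>J. right_ideal J \<and> L \<subseteq> J \<longrightarrow> J = L \<or> J = UNIV)"

definition left_quasi_duo :: "'b::ring_1 itself \<Rightarrow> bool" where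
  "left_quasi_duo _ \<longleftrightarrow> (\<forall>L::'b set. maximal_left_ideal L \<longrightarrow> two_sided_ideal L)"

definition right_quasi_duo :: "'b::ring_1 itself \<Rightarrow> bool" where
  "right_quasi_duo _ \<longleftrightarrow> (\<forall>L::'b set. maximal_right_ideal L \<longrightarrow> two_sided_ideal L)"

end

theory Submission
  imports Defs
begin


lemma exists_max_left:
  fixes J :: "'b::ring_1 set"
  assumes J: "left_ideal J" and n1: "1 \<notin> J"
  shows "\<exists>M. maximal_left_ideal M \<and> J \<subseteq> M"
proof -
  let ?A = "{L::'b set. left_ideal L \<and> J \<subseteq> L \<and> 1 \<notin> L}"
  have "\<forall>C\<in>chains ?A. \<exists>U\<in>?A. \<forall>X\<in>C. X \<subseteq> U"
  proof
    fix C assume C: "C \<in> chains ?A"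
    show "\<exists>U\<in>?A. \<forall>X\<in>C. X \<subseteq> U"
    proof (cases "C = {}")
      case True then show ?thesis using J n1 by auto
    next
      case False
      have sub: "C \<subseteq> ?A" using chainsD2[OF C] .
      have ch: "\<And>X Y. X \<in> C \<Longrightarrow> Y \<in> C \<Longrightarrow> X \<subseteq> Y \<or> Y \<subseteq> X" using chainsD[OF C] by blast
      have li: "left_ideal (\<Union>C)"
        unfolding left_ideal_def
      proof (intro conjI ballI allI)
        obtain X0 where "X0 \<in> C" using False by blast
        then have "left_ideal X0" using sub by blast
        then show "0 \<in> \<Union>C" using \<open>X0 \<in> C\<close> unfolding left_ideal_def by blast
      next
        fix a b assume a: "a \<in> \<Union>C" and b: "b \<in> \<Union>C"
        then obtain X Y where X: "X \<in> C" "a \<in> X" and Y: "Y \<in> C" "b \<in> Y" by blast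
        from ch[OF X(1) Y(1)] show "a + b \<in> \<Union>C"
        proof
          assume "X \<subseteq> Y" moreover have "left_ideal Y" using sub Y by blast ultimately have "a + b \<in> Y" using X Y unfolding left_ideal_def by blast then show ?thesis using Y by blast
        next
          assume "Y \<subseteq> X" moreover have "left_ideal X" using sub X by blast ultimately have "a + b \<in> X" using X Y unfolding left_ideal_def by blast then show ?thesis using X by blast
        qed
      next
        fix a assume "a \<in> \<Union>C" then obtain X where "X \<in> C" "a \<in> X" by blast
        moreover then have "left_ideal X" using sub by blast
        ultimately show "- a \<in> \<Union>C" unfolding left_ideal_def by blast
      next
        fix r a assume "a \<in> \<Union>C" then obtain X where "X \<in> C" "a \<in> X" by blast
        moreover then have "left_ideal X" using sub by blast
        ultimately show "r * a \<in> \<Union>C" unfolding left_ideal_def by blast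
      qed
      have "\<Union>C \<in> ?A" using li False sub by blast
      then show ?thesis by blast
    qed
  qed
  from Zorn_Lemma2[OF this] obtain M where M: "M \<in> ?A" and mx: "\<forall>X\<in>?A. M \<subseteq> X \<longrightarrow> X = M" by blast
  have "maximal_left_ideal M"
    unfolding maximal_left_ideal_def
  proof (intro conjI allI impI)
    show "left_ideal M" using M by blast
    show "M \<noteq> UNIV" using M by blast
  next
    fix K assume K: "left_ideal K \<and> M \<subseteq> K"
    show "K = M \<or> K = UNIV"
    proof (cases "1 \<in> K")
      case True
      have "\<And>r. r \<in> K" using K True unfolding left_ideal_def by (metis mult.right_neutral)
      then show ?thesis by blast
    next
      case False then show ?thesis using mx K M by blast
    qed
  qed
  then show ?thesis using M by blast
qed

lemma exists_max_right:
  fixes J :: "'b::ring_1 set"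
  assumes J: "right_ideal J" and n1: "1 \<notin> J"
  shows "\<exists>M. maximal_right_ideal M \<and> J \<subseteq> M"
proof -
  let ?A = "{L::'b set. right_ideal L \<and> J \<subseteq> L \<and> 1 \<notin> L}"
  have "\<forall>C\<in>chains ?A. \<exists>U\<in>?A. \<forall>X\<in>C. X \<subseteq> U"
  proof
    fix C assume C: "C \<in> chains ?A"
    show "\<exists>U\<in>?A. \<forall>X\<in>C. X \<subseteq> U"
    proof (cases "C = {}")
      case True then show ?thesis using J n1 by auto
    next
      case False
      have sub: "C \<subseteq> ?A" using chainsD2[OF C] .
      have ch: "\<And>X Y. X \<in> C \<Longrightarrow> Y \<in> C \<Longrightarrow> X \<subseteq> Y \<or> Y \<subseteq> X" using chainsD[OF C] by blast
      have li: "right_ideal (\<Union>C)"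
        unfolding right_ideal_def
      proof (intro conjI ballI allI)
        obtain X0 where "X0 \<in> C" using False by blast
        then have "right_ideal X0" using sub by blast
        then show "0 \<in> \<Union>C" using \<open>X0 \<in> C\<close> unfolding right_ideal_def by blast
      next
        fix a b assume a: "a \<in> \<Union>C" and b: "b \<in> \<Union>C"
        then obtain X Y where X: "X \<in> C" "a \<in> X" and Y: "Y \<in> C" "b \<in> Y" by blast
        from ch[OF X(1) Y(1)] show "a + b \<in> \<Union>C"
        proof
          assume "X \<subseteq> Y" moreover have "right_ideal Y" using sub Y by blast ultimately have "a + b \<in> Y" using X Y unfolding right_ideal_def by blast then show ?thesis using Y by blast
        next
          assume "Y \<subseteq> X" moreover have "right_ideal X" using sub X by blast ultimately have "a + b \<in> X" using X Y unfolding right_ideal_def by blast then show ?thesis using X by blast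
        qed
      next
        fix a assume "a \<in> \<Union>C" then obtain X where "X \<in> C" "a \<in> X" by blast
        moreover then have "right_ideal X" using sub by blast
        ultimately show "- a \<in> \<Union>C" unfolding right_ideal_def by blast
      next
        fix r a assume "a \<in> \<Union>C" then obtain X where "X \<in> C" "a \<in> X" by blast
        moreover then have "right_ideal X" using sub by blast
        ultimately show "a * r \<in> \<Union>C" unfolding right_ideal_def by blast
      qed
      have "\<Union>C \<in> ?A" using li False sub by blast
      then show ?thesis by blast
    qed
  qed
  from Zorn_Lemma2[OF this] obtain M where M: "M \<in> ?A" and mx: "\<forall>X\<in>?A. M \<subseteq> X \<longrightarrow> X = M" by blast
  have "maximal_right_ideal M"
    unfolding maximal_right_ideal_def
  proof (intro conjI allI impI)
    show "right_ideal M" using M by blast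
    show "M \<noteq> UNIV" using M by blast
  next
    fix K assume K: "right_ideal K \<and> M \<subseteq> K"
    show "K = M \<or> K = UNIV"
    proof (cases "1 \<in> K")
      case True
      have "\<And>r. r \<in> K" using K True unfolding right_ideal_def by (metis mult.left_neutral)
      then show ?thesis by blast
    next
      case False then show ?thesis using mx K M by blast
    qed
  qed
  then show ?thesis using M by blast
qed

lemma mw_Nil[simp]: "monomial_word x [] = 1" by (simp add: monomial_word_def)
lemma mw_Cons[simp]: "monomial_word x (k # w) = x k * monomial_word x w" by (simp add: monomial_word_def)
lemma mw_append: "monomial_word x (w @ v) = monomial_word x w * monomial_word x v"
  by (induct w) (simp_all add: mult.assoc)




locale dpr =
  fixes I :: "'i set" and \<delta> :: "'i \<Rightarrow> 'a::ring_1 \<Rightarrow> 'a"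
    and emb :: "'a \<Rightarrow> 'b::ring_1" and x :: "'i \<Rightarrow> 'b"
  assumes der: "\<forall>i\<in>I. derivation (\<delta> i)"
    and dp: "is_diff_poly_ring I \<delta> emb x"
begin

lemma emb_add: "emb (a + b) = emb a + emb b"
  using dp unfolding is_diff_poly_ring_def unital_ring_hom_def by blast
lemma emb_mult: "emb (a * b) = emb a * emb b"
  using dp unfolding is_diff_poly_ring_def unital_ring_hom_def by blast
lemma emb_one[simp]: "emb 1 = 1"
  using dp unfolding is_diff_poly_ring_def unital_ring_hom_def by blast
lemma emb_zero[simp]: "emb 0 = 0"
  using emb_add[of 0 0] by simp
lemma comm: "i \<in> I \<Longrightarrow> x i * emb a = emb a * x i + emb (\<delta> i a)"
  using dp unfolding is_diff_poly_ring_def by blast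
lemma ex1: "\<exists>!c. fin_coeffs I c \<and> s = lin_comb emb x c"
  using dp unfolding is_diff_poly_ring_def by blast

lemma d_add: "i \<in> I \<Longrightarrow> \<delta> i (a + b) = \<delta> i a + \<delta> i b"
  using der unfolding derivation_def by blast
lemma d_mult: "i \<in> I \<Longrightarrow> \<delta> i (a * b) = a * \<delta> i b + \<delta> i a * b"
  using der unfolding derivation_def by blast
lemma d_zero: "i \<in> I \<Longrightarrow> \<delta> i 0 = 0"
  using d_add[of i 0 0] by simp
lemma d_one: "i \<in> I \<Longrightarrow> \<delta> i 1 = 0"
  using d_mult[of i 1 1] by simp
lemma d_diff: "i \<in> I \<Longrightarrow> \<delta> i (a - b) = \<delta> i a - \<delta> i b"
  using d_add[of i "a - b" b] by (simp add: algebra_simps)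

lemma lin_comb_super:
  assumes "finite F" "{w. c w \<noteq> 0} \<subseteq> F"
  shows "lin_comb emb x c = (\<Sum>w\<in>F. emb (c w) * monomial_word x w)"
  unfolding lin_comb_def
  by (rule sum.mono_neutral_left) (use assms in auto)

definition coef :: "'b \<Rightarrow> 'i list \<Rightarrow> 'a" where
  "coef s = (THE c. fin_coeffs I c \<and> s = lin_comb emb x c)"

lemma coef: "fin_coeffs I (coef s)" "s = lin_comb emb x (coef s)"
  using theI'[OF ex1[of s]] unfolding coef_def by blast+

lemma coef_eq: "fin_coeffs I c \<Longrightarrow> s = lin_comb emb x c \<Longrightarrow> coef s = c"
  unfolding coef_def by (rule the1_equality[OF ex1]) blast

lemma fin_supp: "finite {w. coef s w \<noteq> 0}"
  using coef(1) unfolding fin_coeffs_def by blast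
lemma coef_set: "coef s w \<noteq> 0 \<Longrightarrow> set w \<subseteq> I"
  using coef(1) unfolding fin_coeffs_def by blast

lemma s_sum: "s = (\<Sum>w\<in>{w. coef s w \<noteq> 0}. emb (coef s w) * monomial_word x w)"
  using coef(2)[of s] unfolding lin_comb_def .

definition Phi :: "('i list \<Rightarrow> 'a \<Rightarrow> 'a) \<Rightarrow> 'b \<Rightarrow> 'a" where
  "Phi g s = (\<Sum>w\<in>{w. coef s w \<noteq> 0}. g w (coef s w))"

lemma Phi_super:
  assumes "\<And>w. g w 0 = 0" "finite F" "{w. coef s w \<noteq> 0} \<subseteq> F"
  shows "Phi g s = (\<Sum>w\<in>F. g w (coef s w))"
  unfolding Phi_def
  by (rule sum.mono_neutral_left) (use assms in auto)

lemma coef_add: "coef (s + t) = (\<lambda>w. coef s w + coef t w)"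
proof (rule coef_eq)
  let ?F = "{w. coef s w \<noteq> 0} \<union> {w. coef t w \<noteq> 0}"
  have fF: "finite ?F" using fin_supp by blast
  show "fin_coeffs I (\<lambda>w. coef s w + coef t w)"
    unfolding fin_coeffs_def
  proof
    show "finite {w. coef s w + coef t w \<noteq> 0}"
      by (rule finite_subset[OF _ fF]) auto
    show "\<forall>w. coef s w + coef t w \<noteq> 0 \<longrightarrow> set w \<subseteq> I"
      using coef_set by (metis add.right_neutral add_0)
  qed
  have "lin_comb emb x (\<lambda>w. coef s w + coef t w) = (\<Sum>w\<in>?F. emb (coef s w + coef t w) * monomial_word x w)"
    by (rule lin_comb_super[OF fF]) auto
  also have "\<dots> = (\<Sum>w\<in>?F. emb (coef s w) * monomial_word x w) + (\<Sum>w\<in>?F. emb (coef t w) * monomial_word x w)"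
    by (simp add: emb_add distrib_right sum.distrib)
  also have "\<dots> = s + t"
    using lin_comb_super[OF fF, of "coef s"] lin_comb_super[OF fF, of "coef t"] coef(2)[of s] coef(2)[of t]
    by auto
  finally show "s + t = lin_comb emb x (\<lambda>w. coef s w + coef t w)" by simp
qed

lemma Phi_add:
  assumes ad: "\<And>w a b. g w (a + b) = g w a + g w b"
  shows "Phi g (s + t) = Phi g s + Phi g t"
proof -
  have g0: "\<And>w. g w 0 = 0" using ad[of _ 0 0] by simp
  let ?F = "{w. coef s w \<noteq> 0} \<union> {w. coef t w \<noteq> 0}"
  have fF: "finite ?F" using fin_supp by blast
  have "Phi g (s + t) = (\<Sum>w\<in>?F. g w (coef (s + t) w))"
    by (rule Phi_super[of g, OF g0 fF]) (auto simp: coef_add)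
  also have "\<dots> = (\<Sum>w\<in>?F. g w (coef s w)) + (\<Sum>w\<in>?F. g w (coef t w))"
    by (simp add: coef_add ad sum.distrib)
  also have "\<dots> = Phi g s + Phi g t"
    using Phi_super[of g, OF g0 fF, where s=s] Phi_super[of g, OF g0 fF, where s=t] by auto
  finally show ?thesis .
qed

lemma coef_zero: "coef 0 = (\<lambda>w. 0)"
  by (rule coef_eq) (auto simp: fin_coeffs_def lin_comb_def)

lemma Phi_zero: "Phi g 0 = 0"
  by (simp add: Phi_def coef_zero)

lemma Phi_uminus:
  assumes ad: "\<And>w a b. g w (a + b) = g w a + g w b"
  shows "Phi g (- s) = - Phi g s"
  using Phi_add[of g, OF ad, where s=s and t="- s"] Phi_zero[of g] by (simp add: eq_neg_iff_add_eq_0 add.commute)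

lemma Phi_diff:
  assumes ad: "\<And>w a b. g w (a + b) = g w a + g w b"
  shows "Phi g (s - t) = Phi g s - Phi g t"
  using Phi_add[of g, OF ad, where s=s and t="- t"] Phi_uminus[of g, OF ad, where s=t] by simp

lemma coef_one: "coef 1 = (\<lambda>w. if w = [] then 1 else 0)"
proof (rule coef_eq)
  show "fin_coeffs I (\<lambda>w. if w = [] then 1 else 0)"
    unfolding fin_coeffs_def by auto
  have "{w. (if w = [] then (1::'a) else 0) \<noteq> 0} = {[]}" by auto
  then show "1 = lin_comb emb x (\<lambda>w. if w = [] then 1 else 0)"
    unfolding lin_comb_def by simp
qed

lemma Phi_one: "Phi g 1 = g [] 1"
proof -
  have "{w. coef 1 w \<noteq> 0} = {[]}" by (auto simp: coef_one)
  then show ?thesis unfolding Phi_def by (simp add: coef_one)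
qed

end



context dpr begin

lemma coef_rmult:
  assumes k: "k \<in> I"
  shows "coef (s * x k) = (\<lambda>v. if v \<noteq> [] \<and> last v = k then coef s (butlast v) else 0)"
proof (rule coef_eq)
  let ?c = "coef s"
  let ?F = "{w. ?c w \<noteq> 0}"
  let ?c' = "\<lambda>v. if v \<noteq> [] \<and> last v = k then coef s (butlast v) else 0"
  let ?G = "(\<lambda>w. w @ [k]) ` ?F"
  have fF: "finite ?F" by (rule fin_supp)
  have fG: "finite ?G" using fF by blast
  have sub: "{v. ?c' v \<noteq> 0} \<subseteq> ?G"
  proof
    fix v assume "v \<in> {v. ?c' v \<noteq> 0}"
    then have v: "v \<noteq> []" "last v = k" "?c (butlast v) \<noteq> 0" by (auto split: if_splits)
    then have "v = butlast v @ [k]" by (metis append_butlast_last_id)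
    then show "v \<in> ?G" using v by blast
  qed
  show "fin_coeffs I ?c'"
    unfolding fin_coeffs_def
  proof
    show "finite {v. ?c' v \<noteq> 0}" using finite_subset[OF sub fG] .
    show "\<forall>v. ?c' v \<noteq> 0 \<longrightarrow> set v \<subseteq> I"
    proof (intro allI impI)
      fix v assume "?c' v \<noteq> 0"
      then have v: "v \<noteq> []" "last v = k" "?c (butlast v) \<noteq> 0" by (auto split: if_splits)
      then have "v = butlast v @ [k]" by (metis append_butlast_last_id)
      moreover have "set (butlast v) \<subseteq> I" using coef_set v(3) .
      ultimately show "set v \<subseteq> I" using k by (metis Un_insert_right empty_set list.simps(15) set_append insert_subset sup_bot.right_neutral)
    qed
  qed
  have inj: "inj_on (\<lambda>w. w @ [k]) ?F" by (auto simp: inj_on_def)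
  have "lin_comb emb x ?c' = (\<Sum>v\<in>?G. emb (?c' v) * monomial_word x v)"
    by (rule lin_comb_super[OF fG sub])
  also have "\<dots> = (\<Sum>w\<in>?F. emb (?c' (w @ [k])) * monomial_word x (w @ [k]))"
    by (simp add: sum.reindex[OF inj])
  also have "\<dots> = (\<Sum>w\<in>?F. emb (?c w) * monomial_word x w * x k)"
    by (simp add: mw_append mult.assoc)
  also have "\<dots> = (\<Sum>w\<in>?F. emb (?c w) * monomial_word x w) * x k"
    by (simp add: sum_distrib_right)
  also have "\<dots> = s * x k"
    by (rule arg_cong[where f="\<lambda>t. t * x k", OF s_sum[symmetric]])
  finally show "s * x k = lin_comb emb x ?c'" by simp
qed

lemma Phi_rmult:
  assumes k: "k \<in> I" and g0: "\<And>w. g w 0 = 0"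
  shows "Phi g (s * x k) = Phi (\<lambda>w a. g (w @ [k]) a) s"
proof -
  let ?c = "coef s"
  let ?F = "{w. ?c w \<noteq> 0}"
  let ?G = "(\<lambda>w. w @ [k]) ` ?F"
  have fF: "finite ?F" by (rule fin_supp)
  have fG: "finite ?G" using fF by blast
  have sub: "{v. coef (s * x k) v \<noteq> 0} \<subseteq> ?G"
  proof
    fix v assume "v \<in> {v. coef (s * x k) v \<noteq> 0}"
    then have v: "v \<noteq> []" "last v = k" "?c (butlast v) \<noteq> 0" by (auto simp: coef_rmult[OF k] split: if_splits)
    then have "v = butlast v @ [k]" by (metis append_butlast_last_id)
    then show "v \<in> ?G" using v by blast
  qed
  have inj: "inj_on (\<lambda>w. w @ [k]) ?F" by (auto simp: inj_on_def)
  have "Phi g (s * x k) = (\<Sum>v\<in>?G. g v (coef (s * x k) v))"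
    by (rule Phi_super[of g, OF g0 fG sub])
  also have "\<dots> = (\<Sum>w\<in>?F. g (w @ [k]) (?c w))"
    by (simp add: sum.reindex[OF inj] coef_rmult[OF k])
  also have "\<dots> = Phi (\<lambda>w a. g (w @ [k]) a) s" by (simp add: Phi_def)
  finally show ?thesis .
qed

lemma coef_lmult:
  assumes k: "k \<in> I"
  shows "coef (x k * s) = (\<lambda>v. (case v of [] \<Rightarrow> 0 | h # w \<Rightarrow> if h = k then coef s w else 0) + \<delta> k (coef s v))"
proof (rule coef_eq)
  let ?c = "coef s"
  let ?F = "{w. ?c w \<noteq> 0}"
  let ?sh = "\<lambda>v. (case v of [] \<Rightarrow> 0 | h # w \<Rightarrow> if h = k then ?c w else 0)"
  let ?c' = "\<lambda>v. ?sh v + \<delta> k (?c v)"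
  let ?H = "(\<lambda>w. k # w) ` ?F"
  let ?G = "?F \<union> ?H"
  have fF: "finite ?F" by (rule fin_supp)
  have fH: "finite ?H" using fF by blast
  have fG: "finite ?G" using fF by blast
  have shH: "\<And>v. ?sh v \<noteq> 0 \<Longrightarrow> v \<in> ?H"
  proof -
    fix v assume "?sh v \<noteq> 0"
    then obtain w where "v = k # w" "?c w \<noteq> 0" by (cases v) (auto split: if_splits)
    then show "v \<in> ?H" by blast
  qed
  have sh0: "\<And>v. v \<notin> ?H \<Longrightarrow> ?sh v = 0" using shH by blast
  have dF: "\<And>v. \<delta> k (?c v) \<noteq> 0 \<Longrightarrow> v \<in> ?F"
    using d_zero[OF k] by fastforce
  have sub: "{v. ?c' v \<noteq> 0} \<subseteq> ?G"
  proof
    fix v assume "v \<in> {v. ?c' v \<noteq> 0}"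
    then have "?sh v \<noteq> 0 \<or> \<delta> k (?c v) \<noteq> 0" by auto
    then show "v \<in> ?G" using shH dF by blast
  qed
  show "fin_coeffs I ?c'"
    unfolding fin_coeffs_def
  proof
    show "finite {v. ?c' v \<noteq> 0}" using finite_subset[OF sub fG] .
    show "\<forall>v. ?c' v \<noteq> 0 \<longrightarrow> set v \<subseteq> I"
    proof (intro allI impI)
      fix v assume "?c' v \<noteq> 0"
      then have "v \<in> ?G" using sub by blast
      then show "set v \<subseteq> I"
      proof
        assume "v \<in> ?F" then show ?thesis using coef_set by blast
      next
        assume "v \<in> ?H" then obtain w where "v = k # w" "?c w \<noteq> 0" by blast
        then show ?thesis using coef_set[of s w] k by simp
      qed
    qed
  qed
  have inj: "inj_on (\<lambda>w. k # w) ?F" by (auto simp: inj_on_def)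
  have "lin_comb emb x ?c' = (\<Sum>v\<in>?G. emb (?c' v) * monomial_word x v)"
    by (rule lin_comb_super[OF fG sub])
  also have "\<dots> = (\<Sum>v\<in>?G. emb (?sh v) * monomial_word x v) + (\<Sum>v\<in>?G. emb (\<delta> k (?c v)) * monomial_word x v)"
    by (simp add: emb_add distrib_right sum.distrib)
  also have "(\<Sum>v\<in>?G. emb (?sh v) * monomial_word x v) = (\<Sum>v\<in>?H. emb (?sh v) * monomial_word x v)"
    by (rule sum.mono_neutral_right[OF fG]) (blast, intro ballI, subst sh0, simp_all)
  also have "\<dots> = (\<Sum>w\<in>?F. emb (?c w) * monomial_word x (k # w))"
    by (simp add: sum.reindex[OF inj])
  also have "(\<Sum>v\<in>?G. emb (\<delta> k (?c v)) * monomial_word x v) = (\<Sum>v\<in>?F. emb (\<delta> k (?c v)) * monomial_word x v)"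
    by (rule sum.mono_neutral_right[OF fG]) (use dF d_zero[OF k] in auto)
  also have "(\<Sum>w\<in>?F. emb (?c w) * monomial_word x (k # w)) + (\<Sum>v\<in>?F. emb (\<delta> k (?c v)) * monomial_word x v)
      = (\<Sum>w\<in>?F. (emb (?c w) * x k + emb (\<delta> k (?c w))) * monomial_word x w)"
    by (simp add: distrib_right sum.distrib mult.assoc)
  also have "\<dots> = (\<Sum>w\<in>?F. x k * (emb (?c w) * monomial_word x w))"
    by (simp add: comm[OF k, symmetric] mult.assoc)
  also have "\<dots> = x k * (\<Sum>w\<in>?F. emb (?c w) * monomial_word x w)"
    by (simp add: sum_distrib_left)
  also have "\<dots> = x k * s"
    by (rule arg_cong[where f="\<lambda>t. x k * t", OF s_sum[symmetric]])
  finally show "x k * s = lin_comb emb x ?c'" by simp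
qed

lemma Phi_lmult:
  assumes k: "k \<in> I" and ad: "\<And>w a b. g w (a + b) = g w a + g w b"
  shows "Phi g (x k * s) = (\<Sum>w\<in>{w. coef s w \<noteq> 0}. g (k # w) (coef s w) + g w (\<delta> k (coef s w)))"
proof -
  have g0: "\<And>w. g w 0 = 0" using ad[of _ 0 0] by simp
  let ?c = "coef s"
  let ?F = "{w. ?c w \<noteq> 0}"
  let ?sh = "\<lambda>v. (case v of [] \<Rightarrow> 0 | h # w \<Rightarrow> if h = k then ?c w else 0)"
  let ?H = "(\<lambda>w. k # w) ` ?F"
  let ?G = "?F \<union> ?H"
  have fF: "finite ?F" by (rule fin_supp)
  have fG: "finite ?G" using fF by blast
  have shH: "\<And>v. ?sh v \<noteq> 0 \<Longrightarrow> v \<in> ?H"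
  proof -
    fix v assume "?sh v \<noteq> 0"
    then obtain w where "v = k # w" "?c w \<noteq> 0" by (cases v) (auto split: if_splits)
    then show "v \<in> ?H" by blast
  qed
  have sh0: "\<And>v. v \<notin> ?H \<Longrightarrow> ?sh v = 0" using shH by blast
  have dF: "\<And>v. \<delta> k (?c v) \<noteq> 0 \<Longrightarrow> v \<in> ?F"
    using d_zero[OF k] by fastforce
  have sub: "{v. coef (x k * s) v \<noteq> 0} \<subseteq> ?G"
  proof
    fix v assume "v \<in> {v. coef (x k * s) v \<noteq> 0}"
    then have "?sh v \<noteq> 0 \<or> \<delta> k (?c v) \<noteq> 0" by (auto simp: coef_lmult[OF k])
    then show "v \<in> ?G" using shH dF by blast
  qed
  have inj: "inj_on (\<lambda>w. k # w) ?F" by (auto simp: inj_on_def)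
  have "Phi g (x k * s) = (\<Sum>v\<in>?G. g v (coef (x k * s) v))"
    by (rule Phi_super[of g, OF g0 fG sub])
  also have "\<dots> = (\<Sum>v\<in>?G. g v (?sh v)) + (\<Sum>v\<in>?G. g v (\<delta> k (?c v)))"
    by (simp add: coef_lmult[OF k] ad sum.distrib)
  also have "(\<Sum>v\<in>?G. g v (?sh v)) = (\<Sum>v\<in>?H. g v (?sh v))"
    by (rule sum.mono_neutral_right[OF fG]) (blast, intro ballI, subst sh0, simp_all add: g0)
  also have "\<dots> = (\<Sum>w\<in>?F. g (k # w) (?c w))"
    by (simp add: sum.reindex[OF inj])
  also have "(\<Sum>v\<in>?G. g v (\<delta> k (?c v))) = (\<Sum>v\<in>?F. g v (\<delta> k (?c v)))"
    by (rule sum.mono_neutral_right[OF fG]) (use dF g0 d_zero[OF k] in auto)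
  finally show ?thesis by (simp add: sum.distrib)
qed

end



context dpr begin

definition Top :: "'i \<Rightarrow> 'i \<Rightarrow> 'i \<Rightarrow> (nat \<Rightarrow> 'a) \<Rightarrow> nat \<Rightarrow> 'a" where
  "Top i j k f = (\<lambda>n. if k \<in> I then (if k = i then f (Suc n) else if k = j then (if n = 0 then 0 else f (n - 1)) else 0) - \<delta> k (f n) else 0)"

definition Tw :: "'i \<Rightarrow> 'i \<Rightarrow> 'i list \<Rightarrow> (nat \<Rightarrow> 'a) \<Rightarrow> nat \<Rightarrow> 'a" where
  "Tw i j w f = foldl (\<lambda>h k. Top i j k h) f w"

definition gR :: "'i \<Rightarrow> 'i \<Rightarrow> (nat \<Rightarrow> 'a) \<Rightarrow> 'i list \<Rightarrow> 'a \<Rightarrow> 'a" where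
  "gR i j f w a = Tw i j w (\<lambda>n. f n * a) 0"

lemma Tw_Nil[simp]: "Tw i j [] f = f" by (simp add: Tw_def)
lemma Tw_Cons[simp]: "Tw i j (k # w) f = Tw i j w (Top i j k f)" by (simp add: Tw_def)

lemma Top_add: "Top i j k (\<lambda>n. f n + g n) = (\<lambda>n. Top i j k f n + Top i j k g n)"
  by (auto simp: Top_def d_add fun_eq_iff algebra_simps)
lemma Top_diff: "Top i j k (\<lambda>n. f n - g n) = (\<lambda>n. Top i j k f n - Top i j k g n)"
  by (auto simp: Top_def d_diff fun_eq_iff algebra_simps)
lemma Top_zero: "Top i j k (\<lambda>n. 0) = (\<lambda>n. 0)"
  by (auto simp: Top_def d_zero fun_eq_iff)

lemma Tw_add: "Tw i j w (\<lambda>n. f n + g n) = (\<lambda>n. Tw i j w f n + Tw i j w g n)"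
  by (induct w arbitrary: f g) (simp_all add: Top_add)
lemma Tw_diff: "Tw i j w (\<lambda>n. f n - g n) = (\<lambda>n. Tw i j w f n - Tw i j w g n)"
  by (induct w arbitrary: f g) (simp_all add: Top_diff)
lemma Tw_zero: "Tw i j w (\<lambda>n. 0) = (\<lambda>n. 0)"
  by (induct w) (simp_all add: Top_zero)

lemma Top_E: "k \<in> I \<Longrightarrow> Top i j k (\<lambda>n. f n * a) = (\<lambda>n. Top i j k f n * a - f n * \<delta> k a)"
  by (auto simp: Top_def d_mult fun_eq_iff algebra_simps)

lemma gR_add: "gR i j f w (a + b) = gR i j f w a + gR i j f w b"
proof -
  have "(\<lambda>n. f n * (a + b)) = (\<lambda>n. f n * a + f n * b)" by (simp add: distrib_left)
  then show ?thesis unfolding gR_def by (simp add: Tw_add)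
qed

lemma gR_step: "k \<in> I \<Longrightarrow> gR i j f (k # w) a + gR i j f w (\<delta> k a) = gR i j (Top i j k f) w a"
  unfolding gR_def by (simp add: Top_E Tw_diff)

lemma Phi_gR: "k \<in> I \<Longrightarrow> Phi (gR i j f) (x k * s) = Phi (gR i j (Top i j k f)) s"
  unfolding Phi_lmult[OF _ gR_add] by (simp add: gR_step Phi_def)

lemma Phi_gR0: "Phi (gR i j (\<lambda>n. 0)) s = 0"
  unfolding Phi_def gR_def by (simp add: Tw_zero)

lemma right_case:
  assumes i: "i \<in> I" and j: "j \<in> I" and ij: "i \<noteq> j" and rq: "right_quasi_duo TYPE('b)"
  shows False
proof -
  define e0 :: "nat \<Rightarrow> 'a" where "e0 = (\<lambda>n. if n = 0 then 1 else 0)"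
  define e1 :: "nat \<Rightarrow> 'a" where "e1 = (\<lambda>n. if n = 1 then 1 else 0)"
  have T1: "Top i j i e0 = (\<lambda>n. 0)" using i by (auto simp: Top_def e0_def fun_eq_iff d_zero d_one)
  have T2: "Top i j j e0 = e1" using j ij by (auto simp: Top_def e0_def e1_def fun_eq_iff d_zero d_one)
  have T3: "Top i j i e1 = e0" using i by (auto simp: Top_def e0_def e1_def fun_eq_iff d_zero d_one)
  let ?g = "gR i j e0"
  let ?K = "{x i * s + (x j * x i - 1) * t | s t. True}"
  have RK: "right_ideal ?K"
    unfolding right_ideal_def
  proof (intro conjI ballI allI)
    show "0 \<in> ?K" by (rule CollectI, rule exI[of _ 0], rule exI[of _ 0]) simp
  next
    fix a b assume "a \<in> ?K" "b \<in> ?K"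
    then obtain s1 t1 s2 t2 where "a = x i * s1 + (x j * x i - 1) * t1" "b = x i * s2 + (x j * x i - 1) * t2" by blast
    then have "a + b = x i * (s1 + s2) + (x j * x i - 1) * (t1 + t2)" by (simp add: algebra_simps)
    then show "a + b \<in> ?K" by blast
  next
    fix a assume "a \<in> ?K"
    then obtain s1 t1 where "a = x i * s1 + (x j * x i - 1) * t1" by blast
    then have "- a = x i * (- s1) + (x j * x i - 1) * (- t1)" by (simp add: algebra_simps)
    then show "- a \<in> ?K" by blast
  next
    fix r a assume "a \<in> ?K"
    then obtain s1 t1 where "a = x i * s1 + (x j * x i - 1) * t1" by blast
    then have "a * r = x i * (s1 * r) + (x j * x i - 1) * (t1 * r)" by (simp add: distrib_right mult.assoc)
    then show "a * r \<in> ?K" by blast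
  qed
  have n1: "1 \<notin> ?K"
  proof
    assume "1 \<in> ?K"
    then obtain s t where st: "1 = x i * s + (x j * x i - 1) * t" by blast
    have e: "x i * s + (x j * x i - 1) * t = x i * s + x j * (x i * t) - t" by (simp add: algebra_simps)
    have "Phi ?g 1 = 1" by (simp add: Phi_one gR_def e0_def)
    moreover have "Phi ?g (x i * s + x j * (x i * t) - t) = 0"
    proof -
      have "Phi ?g (x i * s + x j * (x i * t) - t) = Phi ?g (x i * s) + Phi ?g (x j * (x i * t)) - Phi ?g t"
        by (simp add: Phi_diff Phi_add gR_add)
      also have "Phi ?g (x i * s) = 0" using Phi_gR[OF i] T1 Phi_gR0 by simp
      also have "Phi ?g (x j * (x i * t)) = Phi ?g t" using Phi_gR[OF j] Phi_gR[OF i] T2 T3 by simp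
      finally show ?thesis by simp
    qed
    ultimately show False using st e by simp
  qed
  obtain M where M: "maximal_right_ideal M" "?K \<subseteq> M" using exists_max_right[OF RK n1] by blast
  have tM: "two_sided_ideal M" using rq M(1) unfolding right_quasi_duo_def by blast
  have "x i = x i * 1 + (x j * x i - 1) * 0" by simp
  then have "x i \<in> ?K" by blast
  then have "x i \<in> M" using M(2) by blast
  have a1: "x j * x i \<in> M" using tM \<open>x i \<in> M\<close> unfolding two_sided_ideal_def left_ideal_def by blast
  have "x j * x i - 1 = x i * 0 + (x j * x i - 1) * 1" by simp
  then have "x j * x i - 1 \<in> ?K" by blast
  then have "x j * x i - 1 \<in> M" using M(2) by blast
  then have "- (x j * x i - 1) \<in> M" using tM unfolding two_sided_ideal_def left_ideal_def by blast
  then have "x j * x i + - (x j * x i - 1) \<in> M" using a1 tM unfolding two_sided_ideal_def left_ideal_def by blast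
  then have "1 \<in> M" by simp
  then have "\<And>r. r \<in> M" using tM unfolding two_sided_ideal_def left_ideal_def by (metis mult.right_neutral)
  then show False using M(1) unfolding maximal_right_ideal_def by blast
qed

end



lemma rep_snoc: "concat (replicate (Suc m) [i, j]) = concat (replicate m [i, j]) @ [i, j]"
  by (induct m) auto

lemma P_snoc_i: "i \<noteq> j \<Longrightarrow> w @ [i] \<noteq> concat (replicate n [i, j])"
proof (cases n)
  case 0 then show ?thesis by simp
next
  case (Suc m)
  assume ij: "i \<noteq> j"
  show ?thesis
  proof
    assume "w @ [i] = concat (replicate n [i, j])"
    also have "concat (replicate n [i, j]) = concat (replicate m [i, j]) @ [i, j]" unfolding Suc by (rule rep_snoc)
    finally have "last (w @ [i]) = last (concat (replicate m [i, j]) @ [i, j])" by simp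
    then show False using ij by simp
  qed
qed

lemma P_snoc_ij: "(\<exists>n. w @ [i, j] = concat (replicate n [i, j])) \<longleftrightarrow> (\<exists>n. w = concat (replicate n [i, j]))"
proof
  assume "\<exists>n. w @ [i, j] = concat (replicate n [i, j])"
  then obtain n where n: "w @ [i, j] = concat (replicate n [i, j])" by blast
  show "\<exists>n. w = concat (replicate n [i, j])"
  proof (cases n)
    case 0 then show ?thesis using n by simp
  next
    case (Suc m)
    then have "w @ [i, j] = concat (replicate m [i, j]) @ [i, j]" using n by (simp only: rep_snoc)
    then show ?thesis by blast
  qed
next
  assume "\<exists>n. w = concat (replicate n [i, j])"
  then obtain n where "w = concat (replicate n [i, j])" by blast
  then have "w @ [i, j] = concat (replicate (Suc n) [i, j])" by (simp only: rep_snoc)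
  then show "\<exists>n. w @ [i, j] = concat (replicate n [i, j])" by blast
qed

context dpr begin

lemma left_case:
  assumes i: "i \<in> I" and j: "j \<in> I" and ij: "i \<noteq> j" and lq: "left_quasi_duo TYPE('b)"
  shows False
proof -
  define g :: "'i list \<Rightarrow> 'a \<Rightarrow> 'a" where "g = (\<lambda>w a. if (\<exists>n. w = concat (replicate n [i, j])) then a else 0)"
  have gad: "\<And>w a b. g w (a + b) = g w a + g w b" by (simp add: g_def)
  have g0: "\<And>w. g w 0 = 0" by (simp add: g_def)
  have Pi: "Phi g (s * x i) = 0" for s
  proof -
    have "(\<lambda>w a. g (w @ [i]) a) = (\<lambda>w a. 0)" using P_snoc_i[OF ij] by (auto simp: g_def fun_eq_iff)
    then show ?thesis using Phi_rmult[OF i, of g, OF g0] by (simp add: Phi_def)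
  qed
  have Pij: "Phi g (t * x i * x j) = Phi g t" for t
  proof -
    have "Phi g (t * x i * x j) = Phi (\<lambda>w a. g (w @ [j]) a) (t * x i)"
      by (rule Phi_rmult[of j g, OF j g0])
    also have "\<dots> = Phi (\<lambda>w a. g ((w @ [i]) @ [j]) a) t"
      by (rule Phi_rmult[OF i]) (simp add: g_def)
    also have "(\<lambda>w a. g ((w @ [i]) @ [j]) a) = g"
      using P_snoc_ij[of _ i j] by (auto simp: g_def fun_eq_iff)
    finally show ?thesis .
  qed
  let ?K = "{s * x i + t * (x i * x j - 1) | s t. True}"
  have LK: "left_ideal ?K"
    unfolding left_ideal_def
  proof (intro conjI ballI allI)
    show "0 \<in> ?K" by (rule CollectI, rule exI[of _ 0], rule exI[of _ 0]) simp
  next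
    fix a b assume "a \<in> ?K" "b \<in> ?K"
    then obtain s1 t1 s2 t2 where "a = s1 * x i + t1 * (x i * x j - 1)" "b = s2 * x i + t2 * (x i * x j - 1)" by blast
    then have "a + b = (s1 + s2) * x i + (t1 + t2) * (x i * x j - 1)" by (simp add: distrib_right)
    then show "a + b \<in> ?K" by blast
  next
    fix a assume "a \<in> ?K"
    then obtain s1 t1 where "a = s1 * x i + t1 * (x i * x j - 1)" by blast
    then have "- a = (- s1) * x i + (- t1) * (x i * x j - 1)" by simp
    then show "- a \<in> ?K" by blast
  next
    fix r a assume "a \<in> ?K"
    then obtain s1 t1 where "a = s1 * x i + t1 * (x i * x j - 1)" by blast
    then have "r * a = (r * s1) * x i + (r * t1) * (x i * x j - 1)" by (simp add: distrib_left mult.assoc)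
    then show "r * a \<in> ?K" by blast
  qed
  have n1: "1 \<notin> ?K"
  proof
    assume "1 \<in> ?K"
    then obtain s t where st: "1 = s * x i + t * (x i * x j - 1)" by blast
    have e: "s * x i + t * (x i * x j - 1) = s * x i + t * x i * x j - t" by (simp add: algebra_simps)
    have "Phi g 1 = 1" by (simp add: Phi_one g_def)
    moreover have "Phi g (s * x i + t * x i * x j - t) = 0"
      by (simp add: Phi_diff[OF gad] Phi_add[OF gad] Pi Pij)
    ultimately show False using st e by simp
  qed
  obtain M where M: "maximal_left_ideal M" "?K \<subseteq> M" using exists_max_left[OF LK n1] by blast
  have tM: "two_sided_ideal M" using lq M(1) unfolding left_quasi_duo_def by blast
  have "x i = 1 * x i + 0 * (x i * x j - 1)" by simp
  then have "x i \<in> ?K" by blast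
  then have "x i \<in> M" using M(2) by blast
  have a1: "x i * x j \<in> M" using tM \<open>x i \<in> M\<close> unfolding two_sided_ideal_def right_ideal_def by blast
  have "x i * x j - 1 = 0 * x i + 1 * (x i * x j - 1)" by simp
  then have "x i * x j - 1 \<in> ?K" by blast
  then have "x i * x j - 1 \<in> M" using M(2) by blast
  then have "- (x i * x j - 1) \<in> M" using tM unfolding two_sided_ideal_def left_ideal_def by blast
  then have "x i * x j + - (x i * x j - 1) \<in> M" using a1 tM unfolding two_sided_ideal_def left_ideal_def by blast
  then have "1 \<in> M" by simp
  then have "\<And>r. r \<in> M" using tM unfolding two_sided_ideal_def left_ideal_def by (metis mult.right_neutral)
  then show False using M(1) unfolding maximal_left_ideal_def by blast
qed

end

theorem theorem5p3:
  fixes I :: "'i set" and \<delta> :: "'i \<Rightarrow> 'a::ring_1 \<Rightarrow> 'a"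
    and emb :: "'a \<Rightarrow> 'b::ring_1" and x :: "'i \<Rightarrow> 'b"
  assumes "I \<noteq> {}" and "countable I"
    and "\<forall>i\<in>I. derivation (\<delta> i)"
    and "is_diff_poly_ring I \<delta> emb x"
    and "left_quasi_duo TYPE('b) \<or> right_quasi_duo TYPE('b)"
  shows "card I = 1"
proof (rule ccontr)
  assume nc: "card I \<noteq> 1"
  interpret dpr I \<delta> emb x using assms(3,4) by unfold_locales
  obtain i where i: "i \<in> I" using assms(1) by blast
  have "\<not> I \<subseteq> {i}"
  proof
    assume "I \<subseteq> {i}"
    then have "I = {i}" using i by blast
    then show False using nc by simp
  qed
  then obtain j where j: "j \<in> I" "j \<noteq> i" by blast
  from assms(5) show False
  proof
    assume "left_quasi_duo TYPE('b)"
    then show False using left_case[OF i j(1)] j(2) by metis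
  next
    assume "right_quasi_duo TYPE('b)"
    then show False using right_case[OF i j(1)] j(2) by metis
  qed
qed


end
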